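(* Fix matrices $A\in\mathbb{R}^{n_s\times n_s}$, $B\in\mathbb{R}^{n_s\times n_a}$, a vector $\mathbf b\in\mathbb{R}^{n_s}$ and an integer $q\ge 1$. Let $\mathcal{D}=\{(\mathbf s_k,\mathbf a_k,\mathbf s_{k+1})\}_{k=1}^{n}$ be a finite set of observed state transitions with $\mathbf s_k,\mathbf s_{k+1}\in\mathbb{R}^{n_s}$, $\mathbf a_k\in\mathbb{R}^{n_a}$. For a transition $(\mathbf s,\mathbf a,\mathbf s_+)$ define its noise $\mathbf w:=\mathbf s_+-(A\mathbf s+B\mathbf a+\mathbf b)$, and for any subset $\hat{\mathcal D}\subseteq\mathcal D$ let $\mathcal{W}(\hat{\mathcal D})$ be the set of noises of its transitions and $$\mathcal{S}_{\hat{\mathcal D}}:=\{\theta=(M,\mathbf m)\in\mathbb{R}^{q\times n_s}\times\mathbb{R}^q\ :\ M\mathbf w\le\mathbf m\ \ \forall\,\mathbf w\in\mathcal{W}(\hat{\mathcal D})\}.$$ Call $\bar{\mathcal D}\subseteq\mathcal D$ an optimal data compression if $\mathcal{S}_{\bar{\mathcal D}}=\mathcal{S}_{\mathcal D}$ and $|\bar{\mathcal D}|=\min\{|\hat{\mathcal D}|:\hat{\mathcal D}\subseteq\mathcal D,\ \mathcal{S}_{\hat{\mathcal D}}=\mathcal{S}_{\mathcal D}\}$. Let $\bar{\mathcal D}\subseteq\mathcal D$ consist of exactly one transition for each vertex (extreme point) of the convex hull $\mathrm{Conv}(\mathcal{W}(\mathcal D))$, namely a transition whose noise equals that vertex (so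 that $\mathcal W(\bar{\mathcal D})$ is the vertex representation of $\mathrm{Conv}(\mathcal W(\mathcal D))$). Then $\bar{\mathcal D}$ is an optimal data compression.
   Context: This formalizes the paper's statement that, for the polytopic dispersion-set parametrization $\hat{\mathbf S}_+(\mathbf s,\mathbf a,\theta)=\{A\mathbf s+B\mathbf a+\mathbf b+\mathbf w: M\mathbf w\le\mathbf m\}$ with fixed nominal model $(A,B,\mathbf b)$, the convex hull (in vertex representation) of the observed noise samples is an optimal data compression, i.e., a minimum-cardinality subset of the data defining the same set $\mathcal S$ of admissible parameters $\theta=(M,\mathbf m)$ (the "safe design constraint" set). *)

theory Defs
  imports "HOL-Analysis.Analysis"
begin

type_synonym ('ns,'na) transition = "(real^'ns) \<times> (real^'na) \<times> (real^'ns)"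

definition noise :: "real^'ns^'ns \<Rightarrow> real^'na^'ns \<Rightarrow> real^'ns \<Rightarrow> ('ns,'na) transition \<Rightarrow> real^'ns" where
  "noise A B b tr = (case tr of (s, a, s') \<Rightarrow> s' - (A *v s + B *v a + b))"

definition noises :: "real^'ns^'ns \<Rightarrow> real^'na^'ns \<Rightarrow> real^'ns \<Rightarrow> ('ns,'na) transition set \<Rightarrow> (real^'ns) set" where
  "noises A B b D = noise A B b ` D"

text \<open>Safe design constraint set S_D; the number q of rows is CARD('q); the inequality is componentwise.\<close>
definition safe_set :: "real^'ns^'ns \<Rightarrow> real^'na^'ns \<Rightarrow> real^'ns \<Rightarrow> ('ns,'na) transition set
    \<Rightarrow> ((real^'ns^'q) \<times> (real^'q)) set" where
  "safe_set A B b D = {(M, m). \<forall>w \<in> noises A B b D. M *v w \<le> m}"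

definition optimal_compression :: "real^'ns^'ns \<Rightarrow> real^'na^'ns \<Rightarrow> real^'ns
    \<Rightarrow> ('q::finite) itself \<Rightarrow> ('ns,'na) transition set \<Rightarrow> ('ns,'na) transition set \<Rightarrow> bool" where
  "optimal_compression A B b _ D Dbar \<longleftrightarrow>
     Dbar \<subseteq> D \<and>
     (safe_set A B b Dbar :: ((real^'ns^'q) \<times> (real^'q)) set) = safe_set A B b D \<and>
     card Dbar = Min {card Dh | Dh. Dh \<subseteq> D \<and>
        (safe_set A B b Dh :: ((real^'ns^'q) \<times> (real^'q)) set) = safe_set A B b D}"

end

theory Submission
  imports Defs
begin

lemma halfspaces_convex:
  fixes M :: "real^'n^'q" and m :: "real^'q"
  shows "convex {w. M *v w \<le> m}"
proof -
  have "{w. M *v w \<le> m} = (\<Inter>i. {w. inner (M$i) w \<le> m$i})"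
    by (auto simp: less_eq_vec_def matrix_mult_dot)
  moreover have "convex (\<Inter>i. {w. inner (M$i) w \<le> m$i})"
    by (intro convex_INT convex_halfspace_le)
  ultimately show ?thesis by simp
qed

lemma safe_eq_imp:
  fixes A :: "real^'ns^'ns" and B :: "real^'na^'ns" and b :: "real^'ns"
    and D Dh :: "('ns,'na) transition set"
  assumes "finite D" "Dh \<subseteq> D"
    and eq: "(safe_set A B b Dh :: ((real^'ns^'q::finite) \<times> (real^'q)) set) = safe_set A B b D"
  shows "{v. v extreme_point_of (convex hull (noises A B b D))} \<subseteq> noises A B b Dh"
proof
  fix v assume "v \<in> {v. v extreme_point_of (convex hull (noises A B b D))}"
  hence ve: "v extreme_point_of (convex hull (noises A B b D))" by simp
  have vW: "v \<in> noises A B b D" using extreme_point_of_convex_hull[OF ve] .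
  show "v \<in> noises A B b Dh"
  proof (rule ccontr)
    assume nv: "v \<notin> noises A B b Dh"
    have sub: "noises A B b Dh \<subseteq> noises A B b D" using assms(2) by (auto simp: noises_def)
    have cv: "convex (convex hull (noises A B b D) - {v})"
      using ve by (simp add: extreme_point_of_stillconvex)
    have "noises A B b Dh \<subseteq> convex hull (noises A B b D) - {v}"
      using sub nv hull_subset[of "noises A B b D" convex] by auto
    hence "convex hull (noises A B b Dh) \<subseteq> convex hull (noises A B b D) - {v}"
      using cv by (rule hull_minimal)
    hence nvc: "v \<notin> convex hull (noises A B b Dh)" by auto
    have fin: "finite (noises A B b Dh)"
      using assms(1,2) by (auto simp: noises_def intro: finite_subset)
    obtain a c where ac: "inner a v < c" "\<forall>x\<in>convex hull (noises A B b Dh). inner a x > c"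
      using separating_hyperplane_closed_point[OF convex_convex_hull
          compact_imp_closed[OF finite_imp_compact_convex_hull[OF fin]] nvc] by blast
    define M :: "real^'ns^'q" where "M = (\<chi> i. - a)"
    define m :: "real^'q" where "m = (\<chi> i. - c)"
    have "(M, m) \<in> safe_set A B b Dh"
      unfolding safe_set_def
    proof (clarsimp)
      fix w assume "w \<in> noises A B b Dh"
      hence "inner a w > c" using ac(2) hull_subset[of "noises A B b Dh" convex] by auto
      thus "M *v w \<le> m" by (simp add: M_def m_def matrix_mult_dot less_eq_vec_def)
    qed
    moreover have "(M, m) \<notin> safe_set A B b D"
    proof
      assume "(M, m) \<in> safe_set A B b D"
      hence "M *v v \<le> m" using vW by (auto simp: safe_set_def)
      hence "(M *v v) $ undefined \<le> m $ undefined" by (simp add: less_eq_vec_def)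
      thus False using ac(1) by (simp add: M_def m_def matrix_mult_dot)
    qed
    ultimately show False using eq by simp
  qed
qed

theorem theorem1:
  fixes A :: "real^'ns^'ns" and B :: "real^'na^'ns" and b :: "real^'ns"
    and D Dbar :: "('ns,'na) transition set"
  assumes "finite D"
    and "Dbar \<subseteq> D"
    and "bij_betw (noise A B b) Dbar
           {v. v extreme_point_of (convex hull (noises A B b D))}"
  shows "optimal_compression A B b TYPE('q::finite) D Dbar"
proof -
  let ?E = "{v. v extreme_point_of (convex hull (noises A B b D))}"
  let ?W = "noises A B b D"
  have WE: "noises A B b Dbar = ?E"
    using assms(3) by (simp add: noises_def bij_betw_def)
  have finW: "finite ?W" using assms(1) by (simp add: noises_def)
  have KM: "convex hull ?W = convex hull ?E" using Krein_Milman_polytope[OF finW] .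
  have seq: "(safe_set A B b Dbar :: ((real^'ns^'q) \<times> (real^'q)) set) = safe_set A B b D"
  proof
    show "(safe_set A B b D :: ((real^'ns^'q) \<times> (real^'q)) set) \<subseteq> safe_set A B b Dbar"
      using assms(2) by (auto simp: safe_set_def noises_def)
  next
    show "(safe_set A B b Dbar :: ((real^'ns^'q) \<times> (real^'q)) set) \<subseteq> safe_set A B b D"
    proof clarify
      fix M :: "real^'ns^'q" and m :: "real^'q"
      assume "(M, m) \<in> safe_set A B b Dbar"
      hence "?E \<subseteq> {w. M *v w \<le> m}" using WE by (auto simp: safe_set_def)
      hence "convex hull ?E \<subseteq> {w. M *v w \<le> m}"
        using halfspaces_convex by (rule hull_minimal)
      hence "?W \<subseteq> {w. M *v w \<le> m}" using KM hull_subset[of ?W convex] by auto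
      thus "(M, m) \<in> safe_set A B b D" by (auto simp: safe_set_def)
    qed
  qed
  have cardE: "card Dbar = card ?E" using assms(3) by (rule bij_betw_same_card)
  let ?S = "{card Dh | Dh. Dh \<subseteq> D \<and>
        (safe_set A B b Dh :: ((real^'ns^'q) \<times> (real^'q)) set) = safe_set A B b D}"
  have finS: "finite ?S"
  proof (rule finite_subset)
    show "?S \<subseteq> card ` Pow D" by auto
    show "finite (card ` Pow D)" using assms(1) by simp
  qed
  have "Min ?S = card Dbar"
  proof (rule Min_eqI[OF finS])
    fix y assume "y \<in> ?S"
    then obtain Dh where Dh: "y = card Dh" "Dh \<subseteq> D"
      "(safe_set A B b Dh :: ((real^'ns^'q) \<times> (real^'q)) set) = safe_set A B b D" by blast
    have "?E \<subseteq> noise A B b ` Dh" using safe_eq_imp[OF assms(1) Dh(2,3)] by (simp add: noises_def)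
    moreover have "finite Dh" using Dh(2) assms(1) finite_subset by blast
    ultimately have "card ?E \<le> card Dh"
      by (meson card_image_le card_mono finite_imageI order_trans)
    thus "card Dbar \<le> y" using cardE Dh(1) by simp
  next
    show "card Dbar \<in> ?S" using assms(2) seq by blast
  qed
  thus ?thesis unfolding optimal_compression_def using assms(2) seq by simp
qed

end
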